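(* Consider a finite set $\mathcal{U}$ of users with traffic demands $T_u>0$ and attenuations $\ell_u>0$, constants $g,N_0,\Gamma>0$ and a total bandwidth $W>0$. Consider minimizing $\sum_{u\in\mathcal{U}}\frac{gN_0\Gamma}{\ell_u}\left(2^{T_u/w_u}-1\right)w_u$ over $w_u>0$ subject to $\sum_{u\in\mathcal{U}}w_u=W$, with Lagrangian $\Lambda=\sum_{u}\frac{gN_0\Gamma}{\ell_u}(2^{T_u/w_u}-1)w_u+\lambda\left(\sum_u w_u-W\right)$. The Lagrange multiplier $\lambda^*$ of a stationary point of $\Lambda$ (i.e. $\partial\Lambda/\partial w_u=0$ for all $u$ and $\partial\Lambda/\partial\lambda=0$) is a solution of $f(\lambda^* )=0$, where $$f(\lambda)=W-\sum_{u\in\mathcal{U}}\frac{T_u\ln 2}{1+W_0\!\left(\frac{1}{e}\left[\frac{\lambda\ell_u}{gN_0\Gamma}-1\right]\right)}$$ is a monotonic function of $\lambda$, and $\lambda^*$ lies in the closed interval $$\left(ze^{z+1}+1\right)\frac{gN_0\Gamma}{\ell_m}\le\lambda^*\le\left(ze^{z+1}+1\right)\frac{gN_0\Gamma}{\ell_M},\qquad z\triangleq\frac{\ln 2}{W}\sum_{u\in\mathcal{U}}T_u-1,$$ where $\ell_m=\max_u\ell_u$ and $\ell_M=\min_u\ell_u$.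
   Context: $W_0$ denotes the principal branch of the real Lambert W function, i.e. for $y\ge -1/e$, $x=W_0(y)$ is the solution $x\ge -1$ of $y=xe^x$. In the paper's terminology, $\ell_m$ is the attenuation of users closest to the base station ("minimum attenuation", largest gain) and $\ell_M$ that of cell-edge users, with $\ell_m>\ell_M$. *)

theory Defs
  imports Complex_Main
begin

text \<open>Principal branch of the real Lambert W function: for y \<ge> -1/e,
  lambertW0 y is the unique x \<ge> -1 with x * exp x = y.\<close>
definition lambertW0 :: "real \<Rightarrow> real" where
  "lambertW0 y = (THE x. x \<ge> -1 \<and> x * exp x = y)"

definition f_lambda :: "'a set \<Rightarrow> ('a \<Rightarrow> real) \<Rightarrow> ('a \<Rightarrow> real) \<Rightarrow> real \<Rightarrow> real \<Rightarrow> real \<Rightarrow> real" where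
  "f_lambda U T l K W lam =
     W - (\<Sum>u\<in>U. T u * ln 2 / (1 + lambertW0 ((1 / exp 1) * (lam * l u / K - 1))))"

end

theory Submission
  imports Defs
begin

lemma xexp_strict:
  fixes a b :: real
  assumes "-1 \<le> a" "a < b" shows "a * exp a < b * exp b"
proof (rule DERIV_pos_imp_increasing_open[OF assms(2)])
  fix x assume "a < x" "x < b"
  show "\<exists>y. DERIV (\<lambda>x. x * exp x) x :> y \<and> y > 0"
  proof (intro exI conjI)
    show "DERIV (\<lambda>x. x * exp x) x :> exp x + x * exp x"
      by (auto intro!: derivative_eq_intros)
    have "(1 + x) * exp x > 0" using \<open>a < x\<close> assms(1) by simp
    then show "exp x + x * exp x > 0" by (simp add: algebra_simps)
  qed
next
  show "continuous_on {a..b} (\<lambda>x. x * exp x)" by (intro continuous_intros)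
qed

lemma xexp_exists:
  fixes y :: real assumes "y \<ge> -1 / exp 1"
  shows "\<exists>x. x \<ge> -1 \<and> x * exp x = y"
proof -
  have "\<exists>x. -1 \<le> x \<and> x \<le> max 1 y \<and> x * exp x = y"
  proof (rule IVT)
    show "(-1) * exp (-1) \<le> y" using assms by (simp add: exp_minus field_simps)
    have "max 1 y \<le> max 1 y * exp (max 1 y)"
    proof -
      have "1 \<le> exp (max 1 y)" by simp
      then have "max 1 y * 1 \<le> max 1 y * exp (max 1 y)"
        by (intro mult_left_mono) auto
      then show ?thesis by simp
    qed
    then show "y \<le> max 1 y * exp (max 1 y)" by linarith
    show "-1 \<le> max 1 y" by simp
    show "\<forall>x. - 1 \<le> x \<and> x \<le> max 1 y \<longrightarrow> isCont (\<lambda>x. x * exp x) x"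
      by (simp add: continuous_intros)
  qed
  then show ?thesis by blast
qed

lemma W0_eq: "(x::real) \<ge> -1 \<Longrightarrow> lambertW0 (x * exp x) = x"
  unfolding lambertW0_def
  apply (rule the_equality)
   apply simp
  by (metis linorder_neqE_linordered_idom order_less_irrefl xexp_strict)

lemma W0_props:
  fixes y :: real assumes "y \<ge> -1 / exp 1"
  shows "lambertW0 y \<ge> -1" "lambertW0 y * exp (lambertW0 y) = y"
proof -
  obtain x where x: "x \<ge> -1" "x * exp x = y" using xexp_exists[OF assms] by blast
  show "lambertW0 y \<ge> -1" "lambertW0 y * exp (lambertW0 y) = y"
    using W0_eq[OF x(1)] x by auto
qed

lemma W0_gt:
  fixes y :: real assumes "y > -1 / exp 1"
  shows "lambertW0 y > -1"
proof -
  have "lambertW0 y \<noteq> -1"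
    using W0_props(2)[of y] assms by (auto simp: exp_minus field_simps)
  then show ?thesis using W0_props(1)[of y] assms by auto
qed

lemma W0_mono:
  fixes y1 y2 :: real assumes "y1 \<ge> -1 / exp 1" "y1 \<le> y2"
  shows "lambertW0 y1 \<le> lambertW0 y2"
proof (rule ccontr)
  assume "\<not> ?thesis"
  then have "lambertW0 y2 < lambertW0 y1" by simp
  from xexp_strict[OF W0_props(1)[of y2] this] assms W0_props[of y1] W0_props[of y2]
  show False by auto
qed

lemma phi_strict:
  fixes a b :: real assumes "0 \<le> a" "a < b"
  shows "1 + (a - 1) * exp a < 1 + (b - 1) * exp b"
proof (rule DERIV_pos_imp_increasing_open[OF assms(2)])
  fix x assume "a < x" "x < b"
  show "\<exists>y. DERIV (\<lambda>x. 1 + (x - 1) * exp x) x :> y \<and> y > 0"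
    apply (rule exI[of _ "x * exp x"])
    using \<open>a < x\<close> assms(1)
    by (auto intro!: derivative_eq_intros simp: algebra_simps)
next
  show "continuous_on {a..b} (\<lambda>x. 1 + (x - 1) * exp x)" by (intro continuous_intros)
qed

lemma phi_nonneg: "(s::real) \<ge> 0 \<Longrightarrow> 1 + (s - 1) * exp s \<ge> 0"
  using phi_strict[of 0 s] by (cases "s = 0") auto

lemma deriv_h:
  fixes c t lam x :: real assumes "x > 0"
  shows "((\<lambda>x. c * (2 powr (t / x) - 1) * x + lam * x) has_real_derivative
     (c * (2 powr (t / x) - 1) - c * (2 powr (t / x)) * ln 2 * t / x + lam)) (at x)"
proof -
  have eq: "(\<lambda>x. c * (2 powr (t / x) - 1) * x + lam * x) = (\<lambda>x. c * (exp (t / x * ln 2) - 1) * x + lam * x)"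
    by (simp add: powr_def)
  have "((\<lambda>x. c * (exp (t / x * ln 2) - 1) * x + lam * x) has_real_derivative
     (c * (exp (t / x * ln 2) - 1) - c * (exp (t / x * ln 2)) * ln 2 * t / x + lam)) (at x)"
    using assms
    by (rule_tac derivative_eq_intros refl | simp)+
  then show ?thesis unfolding eq by (simp add: powr_def)
qed

lemma key:
  fixes c t lam x :: real assumes "x > 0" "c > 0"
    and "((\<lambda>x. c * (2 powr (t / x) - 1) * x + lam * x) has_real_derivative 0) (at x)"
  shows "lam / c = 1 + (t * ln 2 / x - 1) * exp (t * ln 2 / x)"
proof -
  have "c * (2 powr (t / x) - 1) - c * (2 powr (t / x)) * ln 2 * t / x + lam = 0"
    using DERIV_unique[OF deriv_h[OF assms(1)] assms(3)] .
  moreover have "2 powr (t / x) = exp (t * ln 2 / x)" by (simp add: powr_def)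
  ultimately show ?thesis using assms by (simp add: field_simps)
qed

theorem lemma1:
  fixes U :: "'a set" and T l w :: "'a \<Rightarrow> real" and g N0 \<Gamma> W lam :: real
  assumes "finite U"
    and "\<And>u. u \<in> U \<Longrightarrow> T u > 0"
    and "\<And>u. u \<in> U \<Longrightarrow> l u > 0"
    and "g > 0" and "N0 > 0" and "\<Gamma> > 0" and "W > 0"
    and "\<And>u. u \<in> U \<Longrightarrow> w u > 0"
    \<comment> \<open>stationarity: partial derivative of the Lagrangian in w_u vanishes\<close>
    and "\<And>u. u \<in> U \<Longrightarrow>
           ((\<lambda>x. g * N0 * \<Gamma> / l u * (2 powr (T u / x) - 1) * x + lam * x)
              has_real_derivative 0) (at (w u))"
    \<comment> \<open>stationarity in lambda: the constraint holds\<close>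
    and "(\<Sum>u\<in>U. w u) = W"
  shows "f_lambda U T l (g * N0 * \<Gamma>) W lam = 0
    \<and> mono_on {0<..} (f_lambda U T l (g * N0 * \<Gamma>) W)
    \<and> (let z = ln 2 / W * (\<Sum>u\<in>U. T u) - 1 in
         (z * exp (z + 1) + 1) * (g * N0 * \<Gamma>) / Max (l ` U) \<le> lam
       \<and> lam \<le> (z * exp (z + 1) + 1) * (g * N0 * \<Gamma>) / Min (l ` U))"
proof -
  define K where "K = g * N0 * \<Gamma>"
  have K: "K > 0" using assms(4-6) by (simp add: K_def)
  define s where "s u = T u * ln 2 / w u" for u
  have spos: "s u > 0" if "u \<in> U" for u
    using assms(2,8)[OF that] by (simp add: s_def)
  have keyu: "lam * l u / K = 1 + (s u - 1) * exp (s u)" if u: "u \<in> U" for u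
  proof -
    have "lam / (K / l u) = 1 + (s u - 1) * exp (s u)"
      unfolding s_def
      by (rule key[OF assms(8)[OF u] _ assms(9)[OF u, folded K_def]])
         (use K assms(3)[OF u] in simp)
    then show ?thesis using assms(3)[OF u] by (simp add: field_simps)
  qed
  have Tw: "T u * ln 2 / s u = w u" if "u \<in> U" for u
    using assms(2,8)[OF that] by (simp add: s_def)
  have part1: "f_lambda U T l K W lam = 0"
  proof -
    have "T u * ln 2 / (1 + lambertW0 ((1 / exp 1) * (lam * l u / K - 1))) = w u"
      if u: "u \<in> U" for u
    proof -
      have "(1 / exp 1) * (lam * l u / K - 1) = (s u - 1) * exp (s u - 1)"
        by (simp add: keyu[OF u] exp_diff)
      moreover have "lambertW0 ((s u - 1) * exp (s u - 1)) = s u - 1"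
        by (rule W0_eq) (use spos[OF u] in simp)
      ultimately show ?thesis using Tw[OF u] by simp
    qed
    then show ?thesis unfolding f_lambda_def using assms(10) by simp
  qed
  have part2: "mono_on {0<..} (f_lambda U T l K W)"
  proof (rule mono_onI)
    fix a b :: real assume ab: "a \<in> {0<..}" "b \<in> {0<..}" "a \<le> b"
    have "T u * ln 2 / (1 + lambertW0 ((1 / exp 1) * (b * l u / K - 1)))
       \<le> T u * ln 2 / (1 + lambertW0 ((1 / exp 1) * (a * l u / K - 1)))" if u: "u \<in> U" for u
    proof -
      have lu: "l u > 0" using assms(3)[OF u] .
      have ya: "(1 / exp 1) * (a * l u / K - 1) > -1 / exp 1"
        using ab lu K by (simp add: field_simps)
      have yab: "(1 / exp 1) * (a * l u / K - 1) \<le> (1 / exp 1) * (b * l u / K - 1)"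
        using ab lu K by (simp add: field_simps mult_right_mono)
      have m: "lambertW0 ((1 / exp 1) * (a * l u / K - 1)) \<le> lambertW0 ((1 / exp 1) * (b * l u / K - 1))"
        by (rule W0_mono) (use ya yab in auto)
      have p: "1 + lambertW0 ((1 / exp 1) * (a * l u / K - 1)) > 0" using W0_gt[OF ya] by simp
      show ?thesis
        by (rule divide_left_mono) (use m p assms(2)[OF u] in auto)
    qed
    then have "(\<Sum>u\<in>U. T u * ln 2 / (1 + lambertW0 ((1 / exp 1) * (b * l u / K - 1))))
       \<le> (\<Sum>u\<in>U. T u * ln 2 / (1 + lambertW0 ((1 / exp 1) * (a * l u / K - 1))))"
      by (rule sum_mono)
    then show "f_lambda U T l K W a \<le> f_lambda U T l K W b"
      unfolding f_lambda_def by simp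
  qed
  have Une: "U \<noteq> {}" using assms(7,10) by auto
  define z where "z = ln 2 / W * (\<Sum>u\<in>U. T u) - 1"
  have zs: "(z + 1) * W = (\<Sum>u\<in>U. s u * w u)"
  proof -
    have "(\<Sum>u\<in>U. s u * w u) = (\<Sum>u\<in>U. T u * ln 2)"
    proof (rule sum.cong)
      fix u assume u: "u \<in> U"
      then have "w u > 0" by (rule assms(8))
      then show "s u * w u = T u * ln 2" by (simp add: s_def)
    qed simp
    moreover have "(\<Sum>u\<in>U. T u * ln 2) = sum T U * ln 2" by (simp add: sum_distrib_right)
    ultimately show ?thesis using assms(7) by (simp add: z_def)
  qed
  have z1: "z + 1 > 0"
    using assms(7) sum_pos[OF assms(1) Une assms(2)] by (simp add: z_def)
  have phiz: "z * exp (z + 1) + 1 = 1 + ((z + 1) - 1) * exp (z + 1)" by simp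
  have lam0: "lam \<ge> 0"
  proof -
    obtain u where u: "u \<in> U" using Une by blast
    have "lam * l u / K \<ge> 0" using keyu[OF u] phi_nonneg[of "s u"] spos[OF u] by simp
    then show ?thesis using K assms(3)[OF u] by (simp add: zero_le_divide_iff zero_le_mult_iff)
  qed
  have fin: "finite (l ` U)" using assms(1) by simp
  obtain u0 where u0: "u0 \<in> U" using Une by blast
  have sumzW: "(\<Sum>u\<in>U. (z + 1) * w u) = (z + 1) * W"
    by (simp only: sum_distrib_left[symmetric] assms(10))
  have lower: "(z * exp (z + 1) + 1) * K / Max (l ` U) \<le> lam"
  proof (rule ccontr)
    assume "\<not> ?thesis"
    then have lt: "lam < (z * exp (z + 1) + 1) * K / Max (l ` U)" by simp
    have "l u0 \<le> Max (l ` U)" using fin u0 by simp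
    then have Mpos: "Max (l ` U) > 0" using assms(3)[OF u0] by linarith
    have lt2: "lam * Max (l ` U) < (z * exp (z + 1) + 1) * K"
      using lt Mpos by (simp add: pos_less_divide_eq)
    have "s u < z + 1" if u: "u \<in> U" for u
    proof (rule ccontr)
      assume "\<not> s u < z + 1"
      then have ge: "1 + ((z + 1) - 1) * exp (z + 1) \<le> 1 + (s u - 1) * exp (s u)"
        using phi_strict[of "z + 1" "s u"] z1 by (cases "s u = z + 1") auto
      have "l u \<le> Max (l ` U)" using fin u by simp
      then have "lam * l u \<le> lam * Max (l ` U)" using lam0 by (rule mult_left_mono)
      then have "lam * l u < (z * exp (z + 1) + 1) * K" using lt2 by linarith
      then have "lam * l u / K < z * exp (z + 1) + 1" using K by (simp add: pos_divide_less_eq)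
      then show False using ge keyu[OF u] by simp
    qed
    then have "(\<Sum>u\<in>U. s u * w u) < (\<Sum>u\<in>U. (z + 1) * w u)"
      using assms(1) Une assms(8) by (intro sum_strict_mono) auto
    then show False using zs sumzW by linarith
  qed
  have upper: "lam \<le> (z * exp (z + 1) + 1) * K / Min (l ` U)"
  proof (rule ccontr)
    assume "\<not> ?thesis"
    then have lt: "lam > (z * exp (z + 1) + 1) * K / Min (l ` U)" by simp
    have Mpos: "Min (l ` U) > 0" using fin Une assms(3) by (subst Min_gr_iff) auto
    have lt2: "lam * Min (l ` U) > (z * exp (z + 1) + 1) * K"
      using lt Mpos by (simp add: pos_divide_less_eq)
    have "s u > z + 1" if u: "u \<in> U" for u
    proof (rule ccontr)
      assume "\<not> s u > z + 1"
      then have ge: "1 + (s u - 1) * exp (s u) \<le> 1 + ((z + 1) - 1) * exp (z + 1)"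
        using phi_strict[of "s u" "z + 1"] spos[OF u] by (cases "s u = z + 1") auto
      have "Min (l ` U) \<le> l u" using fin u by simp
      then have "lam * Min (l ` U) \<le> lam * l u" using lam0 by (rule mult_left_mono)
      then have "lam * l u > (z * exp (z + 1) + 1) * K" using lt2 by linarith
      then have "lam * l u / K > z * exp (z + 1) + 1" using K by (simp add: pos_less_divide_eq)
      then show False using ge keyu[OF u] by simp
    qed
    then have "(\<Sum>u\<in>U. (z + 1) * w u) < (\<Sum>u\<in>U. s u * w u)"
      using assms(1) Une assms(8) by (intro sum_strict_mono) auto
    then show False using zs sumzW by linarith
  qed
  show ?thesis
    using part1 part2 lower upper unfolding K_def z_def Let_def by blast
qed

end
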